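(* Let $-1<a<0$ and $c>b>0$. Then the function $$\varphi(x)=\frac{{}_2F_1(a,b,c,x)}{{}_2F_1(a,b+1,c+1,x)}$$ is logarithmically convex on $(-\infty,1)$.
   Context: ${}_2F_1(a,b,c,x)$ denotes the Gauss hypergeometric function; for $c>b>0$ it is given on $(-\infty,1)$ by ${}_2F_1(a,b,c,x)=\frac{\Gamma(c)}{\Gamma(b)\Gamma(c-b)}\int_0^1\frac{s^{b-1}(1-s)^{c-b-1}}{(1-sx)^a}ds$. *)

theory Defs
  imports "HOL-Analysis.Analysis"
begin

text \<open>Gauss hypergeometric function via the Euler integral representation,
  valid for c > b > 0 and x < 1 (the setting of the paper).\<close>
definition hyp2F1 :: "real \<Rightarrow> real \<Rightarrow> real \<Rightarrow> real \<Rightarrow> real" where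
  "hyp2F1 a b c x =
     Gamma c / (Gamma b * Gamma (c - b)) *
     integral {0..1} (\<lambda>s. s powr (b - 1) * (1 - s) powr (c - b - 1) / (1 - s * x) powr a)"

definition log_convex_on :: "real set \<Rightarrow> (real \<Rightarrow> real) \<Rightarrow> bool" where
  "log_convex_on S f \<longleftrightarrow> (\<forall>x\<in>S. f x > 0) \<and> convex_on S (\<lambda>x. ln (f x))"

end

theory Submission
  imports Defs
begin

lemma powr_bound:
  fixes m t M r :: real
  assumes "0 < m" "m \<le> t" "t \<le> M"
  shows "t powr r \<le> m powr r + M powr r"
proof (cases "r \<ge> 0")
  case True
  have "t powr r \<le> M powr r" using assms True by (intro powr_mono2) auto
  moreover have "0 \<le> m powr r" by simp
  ultimately show ?thesis by linarith
next
  case False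
  have "t powr r \<le> m powr r" using assms False by (intro powr_mono2') auto
  moreover have "0 \<le> M powr r" by simp
  ultimately show ?thesis by linarith
qed

lemma q_deriv:
  fixes s t p :: real and k :: nat
  assumes "0 < 1 - s * t"
  shows "((\<lambda>y. s^k * (1 - s*y) powr p) has_real_derivative
          (-p * (s^(k+1) * (1 - s*t) powr (p-1)))) (at t)"
proof -
  have l: "((\<lambda>y. 1 - s*y) has_real_derivative (0 - s*1)) (at t)"
    by (auto intro!: derivative_eq_intros)
  have "((\<lambda>y. (1 - s*y) powr p) has_real_derivative p * (1 - s*t) powr (p - of_nat 1) * (0 - s*1)) (at t)"
    using DERIV_fun_powr[OF l] assms by simp
  then have "((\<lambda>y. s^k * (1 - s*y) powr p) has_real_derivative s^k * (p * (1 - s*t) powr (p - of_nat 1) * (0 - s*1))) (at t)"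
    by (intro DERIV_cmult)
  then show ?thesis by (simp add: algebra_simps)
qed

lemma taylor_q:
  fixes x0 s y p :: real and k :: nat
  assumes x0: "x0 < 1" and s: "0 \<le> s" "s \<le> 1" and y: "\<bar>y - x0\<bar> < (1 - x0)/2"
  shows "\<bar>s^k*(1-s*y) powr p - s^k*(1-s*x0) powr p - (y-x0)*(-p*(s^(k+1)*(1-s*x0) powr (p-1)))\<bar>
     \<le> \<bar>p*(p-1)\<bar> * (min 1 ((1-x0)/2) powr (p-2) + (2+2*\<bar>x0\<bar>) powr (p-2)) * (y-x0)^2"
proof (cases "y = x0")
  case True then show ?thesis by simp
next
  case False
  define d where "d = (1 - x0)/2"
  define m where "m = min 1 d"
  define M where "M = 2 + 2*\<bar>x0\<bar>"
  have d: "d > 0" using x0 by (simp add: d_def)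
  have d2: "2*d = 1 - x0" by (simp add: d_def)
  have mM: "\<And>t. x0 - d \<le> t \<Longrightarrow> t \<le> x0 + d \<Longrightarrow> m \<le> 1 - s*t \<and> 1 - s*t \<le> M"
  proof -
    fix t assume t: "x0 - d \<le> t" "t \<le> x0 + d"
    have "m \<le> 1 - s*t"
    proof (cases "t \<le> 0")
      case True then have "s*t \<le> 0" using s by (simp add: mult_nonneg_nonpos)
      then show ?thesis unfolding m_def by linarith
    next
      case False then have "s*t \<le> t" using s by (simp add: mult_left_le_one_le)
      then have "d \<le> 1 - s*t" using t d2 by linarith
      then show ?thesis unfolding m_def by simp
    qed
    moreover have "\<bar>s*t\<bar> \<le> \<bar>t\<bar>" using s by (simp add: abs_mult mult_left_le_one_le)
    then have "1 - s*t \<le> M" unfolding M_def using t d2 x0 by linarith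
    ultimately show "m \<le> 1 - s*t \<and> 1 - s*t \<le> M" by simp
  qed
  have m0: "m > 0" using d by (simp add: m_def)
  define q where "q = (\<lambda>y. s^k*(1-s*y) powr p)"
  define q1 where "q1 = (\<lambda>y. -p*(s^(k+1)*(1-s*y) powr (p-1)))"
  define q2 where "q2 = (\<lambda>y. -p*(-(p-1)*(s^(k+1+1)*(1-s*y) powr (p-1-1))))"
  define diff where "diff = (\<lambda>n::nat. if n = 0 then q else if n = 1 then q1 else q2)"
  have D: "\<forall>n t. n < 2 \<and> x0 - d \<le> t \<and> t \<le> x0 + d \<longrightarrow> (diff n has_real_derivative diff (Suc n) t) (at t)"
  proof (intro allI impI)
    fix n :: nat and t :: real assume h: "n < 2 \<and> x0 - d \<le> t \<and> t \<le> x0 + d"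
    then have pos: "0 < 1 - s*t" using mM m0 by force
    show "(diff n has_real_derivative diff (Suc n) t) (at t)"
    proof (cases "n = 0")
      case True
      then show ?thesis unfolding diff_def q_def q1_def using q_deriv[OF pos, of k p] by simp
    next
      case False
      then have "n = 1" using h by simp
      then show ?thesis unfolding diff_def q1_def q2_def
        using DERIV_cmult[OF q_deriv[OF pos, of "k+1" "p-1"], of "-p"] by simp
    qed
  qed
  have yr: "x0 - d \<le> y" "y \<le> x0 + d" using y[folded d_def] by (auto simp: abs_less_iff)
  obtain t where t: "(if y < x0 then y < t \<and> t < x0 else x0 < t \<and> t < y)"
     and eq: "q y = (\<Sum>n<2. (diff n x0 / fact n) * (y - x0)^n) + (diff 2 t / fact 2) * (y - x0)^2"
    using Taylor[of 2 diff q "x0 - d" "x0 + d" x0 y] D yr d False unfolding diff_def by auto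
  have tr: "x0 - d \<le> t" "t \<le> x0 + d" using t yr by (auto split: if_splits)
  have eq2: "q y - q x0 - (y-x0) * q1 x0 = q2 t / 2 * (y-x0)^2"
    using eq by (simp add: diff_def numeral_2_eq_2)
  have "\<bar>q2 t\<bar> = \<bar>p*(p-1)\<bar> * (s^(k+2) * (1-s*t) powr (p-2))"
  proof -
    have "q2 t = p*(p-1) * (s^(k+2) * (1-s*t) powr (p-2))"
      by (simp add: q2_def algebra_simps)
    moreover have "0 \<le> s^(k+2) * (1-s*t) powr (p-2)" using s by simp
    ultimately show ?thesis by (metis abs_mult abs_of_nonneg)
  qed
  also have "\<dots> \<le> \<bar>p*(p-1)\<bar> * (1 * (m powr (p-2) + M powr (p-2)))"
    apply (intro mult_left_mono mult_mono powr_bound)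
    using mM[OF tr] m0 s by (auto simp del: power_Suc simp add: power_le_one)
  finally have b: "\<bar>q2 t\<bar> \<le> \<bar>p*(p-1)\<bar> * (m powr (p-2) + M powr (p-2))" by simp
  have "\<bar>q2 t / 2 * (y-x0)^2\<bar> \<le> \<bar>p*(p-1)\<bar> * (m powr (p-2) + M powr (p-2)) * (y-x0)^2"
  proof -
    have "\<bar>q2 t / 2 * (y-x0)^2\<bar> = \<bar>q2 t\<bar> / 2 * (y-x0)^2" by (simp add: abs_mult)
    also have "\<dots> \<le> \<bar>q2 t\<bar> * (y-x0)^2" by (simp add: mult_right_mono)
    also have "\<dots> \<le> \<bar>p*(p-1)\<bar> * (m powr (p-2) + M powr (p-2)) * (y-x0)^2" using b by (intro mult_right_mono) auto
    finally show ?thesis .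
  qed
  then show ?thesis using eq2 unfolding q_def q1_def m_def M_def d_def by simp
qed


lemma deriv_under_int:
  fixes W :: "real \<Rightarrow> real" and g :: "real \<Rightarrow> real \<Rightarrow> real"
  assumes W: "W integrable_on {0..1}" "\<And>s. s \<in> {0..1} \<Longrightarrow> 0 \<le> W s"
    and d: "d > 0"
    and int: "\<And>y. \<bar>y - x\<bar> < d \<Longrightarrow> (\<lambda>s. W s * g y s) integrable_on {0..1}"
    and int': "(\<lambda>s. W s * g' s) integrable_on {0..1}"
    and bnd: "\<And>s y. s \<in> {0..1} \<Longrightarrow> \<bar>y - x\<bar> < d \<Longrightarrow> \<bar>g y s - g x s - (y - x) * g' s\<bar> \<le> C * (y - x)^2"
  shows "((\<lambda>y. integral {0..1} (\<lambda>s. W s * g y s)) has_real_derivative integral {0..1} (\<lambda>s. W s * g' s)) (at x)"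
proof -
  define F where "F = (\<lambda>y. integral {0..1} (\<lambda>s. W s * g y s))"
  define D where "D = integral {0..1} (\<lambda>s. W s * g' s)"
  define IW where "IW = integral {0..1} W"
  have C: "C \<ge> 0"
  proof -
    have "\<bar>g (x + d/2) 0 - g x 0 - (x + d/2 - x) * g' 0\<bar> \<le> C * (x + d/2 - x)^2"
      using bnd[of 0 "x + d/2"] d by auto
    moreover have "(x + d/2 - x)^2 > 0" using d by simp
    ultimately show ?thesis
    proof (cases "C \<ge> 0")
      case False
      assume le: "\<bar>g (x + d/2) 0 - g x 0 - (x + d/2 - x) * g' 0\<bar> \<le> C * (x + d/2 - x)^2"
        and pos: "(x + d/2 - x)^2 > 0"
      have "C * (x + d/2 - x)^2 < 0" using False pos by (simp add: mult_neg_pos)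
      then show ?thesis using le by linarith
    qed
  qed
  have "((\<lambda>h. (F (x + h) - F x) / h - D) \<longlongrightarrow> 0) (at 0)"
  proof (rule Lim_null_comparison)
    have "\<forall>\<^sub>F h in at 0. h \<noteq> 0 \<and> \<bar>h\<bar> < d"
      unfolding eventually_at using d by (intro exI[of _ d]) (auto simp: dist_norm)
    then show "\<forall>\<^sub>F h in at 0. norm ((F (x + h) - F x) / h - D) \<le> C * \<bar>h\<bar> * IW"
    proof (rule eventually_mono)
      fix h :: real assume h: "h \<noteq> 0 \<and> \<bar>h\<bar> < d"
      have i1: "(\<lambda>s. W s * g (x+h) s) integrable_on {0..1}" using int h by simp
      have i0: "(\<lambda>s. W s * g x s) integrable_on {0..1}" using int d by simp
      have eq: "(F (x + h) - F x) / h - D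
          = integral {0..1} (\<lambda>s. W s * (g (x+h) s - g x s - h * g' s)) / h"
      proof -
        have "integral {0..1} (\<lambda>s. W s * (g (x+h) s - g x s - h * g' s))
           = integral {0..1} (\<lambda>s. W s * g (x+h) s - W s * g x s - h * (W s * g' s))"
          by (simp add: algebra_simps)
        also have "\<dots> = F (x+h) - F x - h * D"
          unfolding F_def D_def
          by (intro integral_unique has_integral_diff has_integral_mult_right integrable_integral i1 i0 int')
        finally show ?thesis using h by (simp add: field_simps)
      qed
      have "\<bar>integral {0..1} (\<lambda>s. W s * (g (x+h) s - g x s - h * g' s))\<bar>
          \<le> integral {0..1} (\<lambda>s. W s * (C * h^2))"
      proof -
        have "(\<lambda>s. W s * (g (x+h) s - g x s - h * g' s)) integrable_on {0..1}"
        proof -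
          have "(\<lambda>s. W s * g (x+h) s - W s * g x s - h * (W s * g' s)) integrable_on {0..1}"
            using i1 i0 int' by (intro integrable_diff integrable_on_mult_right)
          then show ?thesis by (simp add: algebra_simps)
        qed
        moreover have "(\<lambda>s. W s * (C * h^2)) integrable_on {0..1}"
          using W(1) by (rule integrable_on_mult_left)
        moreover have "\<And>s. s \<in> {0..1} \<Longrightarrow> norm (W s * (g (x+h) s - g x s - h * g' s)) \<le> W s * (C * h^2)"
        proof -
          fix s :: real assume s: "s \<in> {0..1}"
          have "\<bar>g (x+h) s - g x s - h * g' s\<bar> \<le> C * h^2" using bnd[of s "x+h"] s h by simp
          then show "norm (W s * (g (x+h) s - g x s - h * g' s)) \<le> W s * (C * h^2)"
            using W(2)[OF s] by (simp add: abs_mult mult_left_mono)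
        qed
        ultimately have "norm (integral {0..1} (\<lambda>s. W s * (g (x+h) s - g x s - h * g' s)))
          \<le> integral {0..1} (\<lambda>s. W s * (C * h^2))"
          by (rule integral_norm_bound_integral)
        then show ?thesis by simp
      qed
      also have "\<dots> = C * h^2 * IW" unfolding IW_def
        by (simp add: integral_mult_left mult.commute)
      finally have "norm ((F (x + h) - F x) / h - D) \<le> C * h^2 * IW / \<bar>h\<bar>"
        using h by (simp add: eq abs_divide divide_right_mono)
      also have "\<dots> = C * \<bar>h\<bar> * IW" proof -
        have "C * h^2 * IW / \<bar>h\<bar> = C * (\<bar>h\<bar> * \<bar>h\<bar>) * IW / \<bar>h\<bar>"
          by (metis power2_abs power2_eq_square)
        also have "\<dots> = C * \<bar>h\<bar> * IW" using h by (simp del: abs_mult_self_eq)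
        finally show ?thesis .
      qed
      finally show "norm ((F (x + h) - F x) / h - D) \<le> C * \<bar>h\<bar> * IW" .
    qed
    have "((\<lambda>h. C * \<bar>h\<bar> * IW) \<longlongrightarrow> C * \<bar>0\<bar> * IW) (at 0)"
      by (intro tendsto_intros)
    then show "((\<lambda>h. C * \<bar>h\<bar> * IW) \<longlongrightarrow> 0) (at 0)" by simp
  qed
  then have "((\<lambda>h. (F (x + h) - F x) / h) \<longlongrightarrow> D) (at 0)"
    using Lim_null by blast
  then show ?thesis unfolding F_def D_def DERIV_def .
qed


definition w :: "real \<Rightarrow> real \<Rightarrow> real \<Rightarrow> real" where
  "w b c s = s powr (b - 1) * (1 - s) powr (c - b - 1)"

definition J :: "real \<Rightarrow> real \<Rightarrow> nat \<Rightarrow> real \<Rightarrow> real \<Rightarrow> real" where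
  "J b c k p x = integral {0..1} (\<lambda>s. w b c s * (s^k * (1 - s*x) powr p))"

lemma w_nonneg: "0 \<le> w b c s" by (simp add: w_def)

lemma w_int: assumes "0 < b" "b < c" shows "w b c integrable_on {0..1}"
proof -
  have "c - b > 0" using assms by simp
  from has_integral_Beta_real[OF assms(1) this] show ?thesis
    unfolding w_def[abs_def] by blast
qed

lemma pos1: fixes x s :: real assumes "x < 1" "0 \<le> s" "s \<le> 1" shows "0 < 1 - s*x"
proof (cases "x \<le> 0")
  case True then have "s*x \<le> 0" using assms by (simp add: mult_nonneg_nonpos)
  then show ?thesis by linarith
next
  case False then have "s*x \<le> x" using assms by (simp add: mult_left_le_one_le)
  then show ?thesis using assms by linarith
qed

lemma J_int:
  assumes "0 < b" "b < c" "x < 1"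
  shows "(\<lambda>s. w b c s * (s^k * (1 - s*x) powr p)) integrable_on {0..1}"
proof -
  have ai: "w b c absolutely_integrable_on {0..1}"
    using w_int[OF assms(1,2)] w_nonneg by (intro nonnegative_absolutely_integrable_1) auto
  have cont: "continuous_on {0..1} (\<lambda>s. s^k * (1 - s*x) powr p)"
    by (intro continuous_intros) (force dest: pos1[OF assms(3)])
  have "(\<lambda>s. (s^k * (1 - s*x) powr p) * w b c s) absolutely_integrable_on {0..1}"
  proof (rule absolutely_integrable_bounded_measurable_product_real)
    show "(\<lambda>s. s^k * (1 - s*x) powr p) \<in> borel_measurable (lebesgue_on {0..1})"
      using cont by (intro continuous_imp_measurable_on_sets_lebesgue) auto
    show "{0..1::real} \<in> sets lebesgue" by simp
    show "bounded ((\<lambda>s. s^k * (1 - s*x) powr p) ` {0..1})"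
      using cont by (intro compact_imp_bounded compact_continuous_image) auto
  qed (rule ai)
  then have "(\<lambda>s. (s^k * (1 - s*x) powr p) * w b c s) integrable_on {0..1}"
    using absolutely_integrable_on_def by blast
  then show ?thesis by (simp add: mult.commute)
qed

lemma J_deriv:
  assumes b: "0 < b" "b < c" and x: "x < 1"
  shows "(J b c k p has_real_derivative (-p * J b c (k+1) (p-1) x)) (at x)"
proof -
  define C where "C = \<bar>p*(p-1)\<bar> * (min 1 ((1-x)/2) powr (p-2) + (2+2*\<bar>x\<bar>) powr (p-2))"
  have int': "(\<lambda>s. w b c s * (-p * (s^(k+1) * (1 - s*x) powr (p-1)))) integrable_on {0..1}"
  proof -
    have "(\<lambda>s. -p * (w b c s * (s^(k+1) * (1 - s*x) powr (p-1)))) integrable_on {0..1}"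
      using J_int[OF b x] by (rule integrable_on_mult_right)
    then show ?thesis by (simp add: algebra_simps)
  qed
  have "((\<lambda>y. integral {0..1} (\<lambda>s. w b c s * (s^k * (1 - s*y) powr p))) has_real_derivative
        integral {0..1} (\<lambda>s. w b c s * (-p * (s^(k+1) * (1 - s*x) powr (p-1))))) (at x)"
  proof (rule deriv_under_int[where d = "(1-x)/2" and C = C])
    show "w b c integrable_on {0..1}" using w_int[OF b] .
    show "\<And>s. 0 \<le> w b c s" by (rule w_nonneg)
    show "(1-x)/2 > 0" using x by simp
    show "\<And>y. \<bar>y - x\<bar> < (1-x)/2 \<Longrightarrow> (\<lambda>s. w b c s * (s^k * (1 - s*y) powr p)) integrable_on {0..1}"
    proof -
      fix y :: real assume a: "\<bar>y - x\<bar> < (1-x)/2"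
      have "y - x < (1-x)/2" using a abs_less_iff by blast
      then have "2*y < 1 + x" by (simp add: field_simps)
      then have "y < 1" using x by linarith
      then show "(\<lambda>s. w b c s * (s^k * (1 - s*y) powr p)) integrable_on {0..1}" using J_int[OF b] by blast
    qed
    show "\<And>s y. s \<in> {0..1} \<Longrightarrow> \<bar>y - x\<bar> < (1-x)/2 \<Longrightarrow>
       \<bar>s^k * (1 - s*y) powr p - s^k * (1 - s*x) powr p - (y - x) * (-p * (s^(k+1) * (1 - s*x) powr (p-1)))\<bar> \<le> C * (y - x)^2"
      unfolding C_def using taylor_q[OF x] by auto
  qed (rule int')
  moreover have "integral {0..1} (\<lambda>s. w b c s * (-p * (s^(k+1) * (1 - s*x) powr (p-1))))
      = -p * J b c (k+1) (p-1) x"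
  proof -
    have "integral {0..1} (\<lambda>s. w b c s * (-p * (s^(k+1) * (1 - s*x) powr (p-1))))
       = integral {0..1} (\<lambda>s. -p * (w b c s * (s^(k+1) * (1 - s*x) powr (p-1))))"
      by (simp add: algebra_simps)
    also have "\<dots> = -p * J b c (k+1) (p-1) x" unfolding J_def by (rule integral_mult_right)
    finally show ?thesis .
  qed
  ultimately show ?thesis unfolding J_def[abs_def] by simp
qed


lemma convex_on_cong_pt:
  assumes "convex_on S f" "\<And>x. x \<in> S \<Longrightarrow> f x = g x"
  shows "convex_on S g"
proof -
  have cS: "convex S" using assms(1) by (simp add: convex_on_def)
  show ?thesis unfolding convex_on_def
  proof (intro conjI cS ballI allI impI)
    fix x y u v assume h: "x \<in> S" "y \<in> S" "0 \<le> (u::real)" "0 \<le> (v::real)" "u + v = 1"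
    have m: "u *\<^sub>R x + v *\<^sub>R y \<in> S" using cS h unfolding convex_def by blast
    have "f (u *\<^sub>R x + v *\<^sub>R y) \<le> u * f x + v * f y"
      using assms(1) h unfolding convex_on_def by blast
    then show "g (u *\<^sub>R x + v *\<^sub>R y) \<le> u * g x + v * g y"
      using assms(2)[OF m] assms(2)[OF h(1)] assms(2)[OF h(2)] by simp
  qed
qed

lemma J_nonneg:
  assumes "0 < b" "b < c" "x < 1"
  shows "0 \<le> J b c k p x"
  unfolding J_def using J_int[OF assms] w_nonneg
  by (intro integral_nonneg) (auto intro!: mult_nonneg_nonneg)

lemma w_pow: "s \<in> {0..1} \<Longrightarrow> w b c s * s^k = s powr (b + real k - 1) * (1 - s) powr (c - b - 1)"
proof (cases "s = 0")
  case True then show ?thesis by (simp add: w_def)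
next
  case False
  assume "s \<in> {0..1}"
  then have sp: "s > 0" using False by auto
  have e: "b + real k - 1 = (b - 1) + real k" by simp
  have "s powr (b + real k - 1) = s powr (b - 1) * s powr (real k)"
    unfolding e by (rule powr_add)
  also have "s powr (real k) = s^k" using sp by (simp add: powr_realpow)
  finally show ?thesis unfolding w_def by (simp add: algebra_simps)
qed

lemma J_pos:
  assumes b: "0 < b" "b < c" and x: "x < 1" and p: "0 \<le> p"
  shows "0 < J b c k p x"
proof -
  define m where "m = min 1 (1 - x)"
  have m0: "m > 0" using x by (simp add: m_def)
  have mle: "\<And>s. s \<in> {0..1} \<Longrightarrow> m \<le> 1 - s*x"
  proof -
    fix s :: real assume s: "s \<in> {0..1}"
    show "m \<le> 1 - s*x"
    proof (cases "x \<le> 0")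
      case True then have "s*x \<le> 0" using s by (simp add: mult_nonneg_nonpos)
      then show ?thesis unfolding m_def by linarith
    next
      case False then have "s*x \<le> x" using s by (simp add: mult_left_le_one_le)
      then show ?thesis unfolding m_def by linarith
    qed
  qed
  have cb: "c - b > 0" using b by simp
  have bk: "b + real k > 0" using b by simp
  have HB: "((\<lambda>s. s powr (b + real k - 1) * (1 - s) powr (c - b - 1)) has_integral Beta (b + real k) (c - b)) {0..1}"
    using has_integral_Beta_real[OF bk cb] by simp
  have HB2: "((\<lambda>s. m powr p * (w b c s * s^k)) has_integral m powr p * Beta (b + real k) (c - b)) {0..1}"
  proof -
    have "((\<lambda>s. w b c s * s^k) has_integral Beta (b + real k) (c - b)) {0..1}"
      using HB by (rule has_integral_eq[rotated]) (simp add: w_pow)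
    then show ?thesis by (rule has_integral_mult_right)
  qed
  have Bpos: "Beta (b + real k) (c - b) > 0"
    unfolding Beta_def using bk cb by (intro divide_pos_pos mult_pos_pos Gamma_real_pos) auto
  have "m powr p * Beta (b + real k) (c - b) \<le> J b c k p x"
    unfolding J_def
  proof (rule has_integral_le[OF HB2 integrable_integral[OF J_int[OF b x]]])
    fix s :: real assume s: "s \<in> {0..1}"
    have "m powr p \<le> (1 - s*x) powr p" using mle[OF s] m0 p by (intro powr_mono2) auto
    then have "m powr p * (w b c s * s^k) \<le> (1 - s*x) powr p * (w b c s * s^k)"
      using w_nonneg s by (intro mult_right_mono) auto
    then show "m powr p * (w b c s * s^k) \<le> w b c s * (s^k * (1 - s*x) powr p)"
      by (simp add: algebra_simps)
  qed
  moreover have "m powr p * Beta (b + real k) (c - b) > 0" using m0 Bpos by simp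
  ultimately show ?thesis by linarith
qed

lemma J_mono_k:
  assumes b: "0 < b" "b < c" and x: "x < 1"
  shows "J b c (Suc k) p x \<le> J b c k p x"
  unfolding J_def
proof (rule integral_le[OF J_int[OF b x] J_int[OF b x]])
  fix s :: real assume s: "s \<in> {0..1}"
  have "s^(Suc k) \<le> s^k" using s by (simp add: mult_left_le_one_le)
  then have "s^(Suc k) * (1 - s*x) powr p \<le> s^k * (1 - s*x) powr p"
    by (intro mult_right_mono) auto
  then show "w b c s * (s ^ Suc k * (1 - s * x) powr p) \<le> w b c s * (s ^ k * (1 - s * x) powr p)"
    using w_nonneg by (intro mult_left_mono) auto
qed

lemma phi_mono:
  fixes s t x :: real
  assumes x: "x < 1" and st: "0 \<le> s" "s \<le> t" "t \<le> 1"
  shows "(s / (1 - s*x))^j \<le> (t / (1 - t*x))^j"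
proof -
  have ps: "0 < 1 - s*x" using pos1[OF x] st by auto
  have pt: "0 < 1 - t*x" using pos1[OF x] st by auto
  have "s * (1 - t*x) \<le> t * (1 - s*x)"
  proof -
    have "s * (1 - t*x) = s - s*t*x" by (simp add: algebra_simps)
    moreover have "t * (1 - s*x) = t - s*t*x" by (simp add: algebra_simps)
    ultimately show ?thesis using st by linarith
  qed
  then have "s / (1 - s*x) \<le> t / (1 - t*x)" using ps pt by (simp add: divide_simps)
  moreover have "0 \<le> s / (1 - s*x)" using ps st by simp
  ultimately show ?thesis by (rule power_mono)
qed

lemma cheb:
  assumes b: "0 < b" "b < c" and x: "x < 1" and al: "0 \<le> al"
  shows "J b c 1 al x * J b c j (al - real j) x \<le> J b c 0 al x * J b c (j+1) (al - real j) x"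
proof -
  define P where "P = J b c 0 al x"
  define Q where "Q = J b c 1 al x"
  define t where "t = Q / P"
  have P0: "P > 0" unfolding P_def using J_pos[OF b x al] .
  have Q0: "Q \<ge> 0" unfolding Q_def using J_nonneg[OF b x] .
  have QP: "Q \<le> P" unfolding Q_def P_def using J_mono_k[OF b x, of 0 al] by simp
  have t01: "0 \<le> t" "t \<le> 1" unfolding t_def using P0 Q0 QP by (auto simp: divide_simps)
  have tP: "t * P = Q" unfolding t_def using P0 by simp
  define ph where "ph = (\<lambda>s::real. (s / (1 - s*x))^j)"
  define f where "f = (\<lambda>s. w b c s * (s^(j+1) * (1 - s*x) powr (al - real j))
      - t * (w b c s * (s^j * (1 - s*x) powr (al - real j)))
      - ph t * (w b c s * (s^1 * (1 - s*x) powr al))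
      + t * ph t * (w b c s * (s^0 * (1 - s*x) powr al)))"
  have HI: "(f has_integral (J b c (j+1) (al - real j) x - t * J b c j (al - real j) x
       - ph t * Q + t * ph t * P)) {0..1}"
    unfolding f_def P_def Q_def J_def
    by (intro has_integral_add has_integral_diff has_integral_mult_right integrable_integral J_int[OF b x])
  have fnn: "\<And>s. s \<in> {0..1} \<Longrightarrow> 0 \<le> f s"
  proof -
    fix s :: real assume s: "s \<in> {0..1}"
    have E: "0 < 1 - s*x" using pos1[OF x] s by auto
    have pw: "(1 - s*x) powr (al - real j) = (1 - s*x) powr al / (1 - s*x)^j"
      using E by (simp add: powr_diff powr_realpow)
    have "f s = w b c s * (1 - s*x) powr al * ((s - t) * (ph s - ph t))"
    proof -
      have Et: "0 < 1 - t*x" using pos1[OF x] t01 by auto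
      have nz: "(1 - s*x)^j \<noteq> 0" "(1 - t*x)^j \<noteq> 0" using E Et by simp_all
      show ?thesis
        unfolding f_def ph_def pw power_divide by (simp add: field_simps nz) (simp add: diff_divide_distrib add_divide_distrib)
    qed
    moreover have "0 \<le> (s - t) * (ph s - ph t)"
    proof (cases "s \<le> t")
      case True
      then have "ph s \<le> ph t" unfolding ph_def using phi_mono[OF x, of s t j] s t01 by auto
      then show ?thesis using True by (simp add: mult_nonpos_nonpos)
    next
      case False
      then have "ph t \<le> ph s" unfolding ph_def using phi_mono[OF x, of t s j] s t01 by auto
      then show ?thesis using False by simp
    qed
    ultimately show "0 \<le> f s" using w_nonneg by simp
  qed
  have "0 \<le> J b c (j+1) (al - real j) x - t * J b c j (al - real j) x - ph t * Q + t * ph t * P"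
    using has_integral_nonneg[OF HI fnn] .
  moreover have "t * ph t * P = ph t * Q" using tP by (simp add: algebra_simps)
  ultimately have "t * J b c j (al - real j) x \<le> J b c (j+1) (al - real j) x" by linarith
  then have "P * (t * J b c j (al - real j) x) \<le> P * J b c (j+1) (al - real j) x"
    using P0 by (intro mult_left_mono) auto
  moreover have "P * (t * J b c j (al - real j) x) = Q * J b c j (al - real j) x"
    using tP by (metis mult.assoc mult.commute)
  ultimately show ?thesis unfolding P_def Q_def by linarith
qed


theorem theorem7p1:
  fixes a b c :: real
  assumes "-1 < a" "a < 0" "0 < b" "b < c"
  shows "log_convex_on {..<1} (\<lambda>x. hyp2F1 a b c x / hyp2F1 a (b + 1) (c + 1) x)"
proof -
  define al where "al = -a"
  have al: "0 < al" "al < 1" using assms(1,2) by (auto simp: al_def)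
  have b: "0 < b" "b < c" using assms(3,4) by auto
  define K1 where "K1 = Gamma c / (Gamma b * Gamma (c - b))"
  define K2 where "K2 = Gamma (c + 1) / (Gamma (b + 1) * Gamma (c - b))"
  have K: "K1 > 0" "K2 > 0" unfolding K1_def K2_def using b
    by (auto intro!: divide_pos_pos mult_pos_pos Gamma_real_pos)
  have H1: "\<And>x. x < 1 \<Longrightarrow> hyp2F1 a b c x = K1 * J b c 0 al x"
  proof -
    fix x :: real assume x: "x < 1"
    have "integral {0..1} (\<lambda>s. s powr (b - 1) * (1 - s) powr (c - b - 1) / (1 - s * x) powr a)
        = J b c 0 al x"
      unfolding J_def by (rule integral_cong) (simp add: w_def al_def powr_minus_divide)
    then show "hyp2F1 a b c x = K1 * J b c 0 al x" unfolding hyp2F1_def K1_def by simp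
  qed
  have H2: "\<And>x. x < 1 \<Longrightarrow> hyp2F1 a (b + 1) (c + 1) x = K2 * J b c 1 al x"
  proof -
    fix x :: real assume x: "x < 1"
    have e: "c + 1 - (b + 1) - 1 = c - b - 1" "c + 1 - (b + 1) = c - b" "b + 1 - 1 = b" by simp_all
    have "integral {0..1} (\<lambda>s. s powr (b + 1 - 1) * (1 - s) powr (c + 1 - (b + 1) - 1) / (1 - s * x) powr a)
        = J b c 1 al x"
      unfolding J_def
    proof (rule integral_cong)
      fix s :: real assume s: "s \<in> {0..1}"
      have "w b c s * s^1 = s powr (b + real 1 - 1) * (1 - s) powr (c - b - 1)" using w_pow[OF s] .
      then show "s powr (b + 1 - 1) * (1 - s) powr (c + 1 - (b + 1) - 1) / (1 - s * x) powr a =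
          w b c s * (s ^ 1 * (1 - s * x) powr al)"
        unfolding e al_def by (simp add: powr_minus_divide)
    qed
    then show "hyp2F1 a (b + 1) (c + 1) x = K2 * J b c 1 al x" unfolding hyp2F1_def K2_def e by simp
  qed
  have P0: "\<And>x. x < 1 \<Longrightarrow> J b c 0 al x > 0" using J_pos[OF b] al by auto
  have Q0: "\<And>x. x < 1 \<Longrightarrow> J b c 1 al x > 0" using J_pos[OF b] al by auto
  define L where "L = (\<lambda>x. ln (K1 / K2) + ln (J b c 0 al x) - ln (J b c 1 al x))"
  define L1 where "L1 = (\<lambda>x. -al * J b c 1 (al - 1) x / J b c 0 al x + al * J b c 2 (al - 1) x / J b c 1 al x)"
  define L2 where "L2 = (\<lambda>x.
     ((-al * (-(al - 1) * J b c 2 (al - 2) x)) * J b c 0 al x - (-al * J b c 1 (al - 1) x) * (-al * J b c 1 (al - 1) x))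
        / (J b c 0 al x * J b c 0 al x)
   + ((al * (-(al - 1) * J b c 3 (al - 2) x)) * J b c 1 al x - (al * J b c 2 (al - 1) x) * (-al * J b c 2 (al - 1) x))
        / (J b c 1 al x * J b c 1 al x))"
  have e2: "al - 1 - 1 = al - 2" by simp
  have dL: "\<And>x. x < 1 \<Longrightarrow> (L has_real_derivative L1 x) (at x)"
  proof -
    fix x :: real assume x: "x < 1"
    have dJ0: "(J b c 0 al has_real_derivative -al * J b c 1 (al - 1) x) (at x)"
      using J_deriv[OF b x, of 0 al] by simp
    have dJ1: "(J b c 1 al has_real_derivative -al * J b c 2 (al - 1) x) (at x)"
      using J_deriv[OF b x, of 1 al] by (simp add: numeral_2_eq_2)
    have d0: "((\<lambda>y. ln (J b c 0 al y)) has_real_derivative (1 / J b c 0 al x) * (-al * J b c 1 (al - 1) x)) (at x)"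
      by (rule DERIV_chain2[OF DERIV_ln_divide[OF P0[OF x]] dJ0])
    have d1: "((\<lambda>y. ln (J b c 1 al y)) has_real_derivative (1 / J b c 1 al x) * (-al * J b c 2 (al - 1) x)) (at x)"
      by (rule DERIV_chain2[OF DERIV_ln_divide[OF Q0[OF x]] dJ1])
    have "(L has_real_derivative 0 + (1 / J b c 0 al x) * (-al * J b c 1 (al - 1) x)
            - (1 / J b c 1 al x) * (-al * J b c 2 (al - 1) x)) (at x)"
      unfolding L_def by (intro DERIV_diff DERIV_add DERIV_const d0 d1)
    then show "(L has_real_derivative L1 x) (at x)" unfolding L1_def by simp
  qed
  have dL1: "\<And>x. x < 1 \<Longrightarrow> (L1 has_real_derivative L2 x) (at x)"
  proof -
    fix x :: real assume x: "x < 1"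
    have dJ0: "(J b c 0 al has_real_derivative -al * J b c 1 (al - 1) x) (at x)"
      using J_deriv[OF b x, of 0 al] by simp
    have dJ1: "(J b c 1 al has_real_derivative -al * J b c 2 (al - 1) x) (at x)"
      using J_deriv[OF b x, of 1 al] by (simp add: numeral_2_eq_2)
    have dA: "(J b c 1 (al - 1) has_real_derivative -(al - 1) * J b c 2 (al - 2) x) (at x)"
      using J_deriv[OF b x, of 1 "al - 1"] by (simp add: e2 numeral_2_eq_2 numeral_3_eq_3)
    have dB: "(J b c 2 (al - 1) has_real_derivative -(al - 1) * J b c 3 (al - 2) x) (at x)"
      using J_deriv[OF b x, of 2 "al - 1"] by (simp add: e2 numeral_2_eq_2 numeral_3_eq_3)
    have "((\<lambda>y. -al * J b c 1 (al - 1) y / J b c 0 al y + al * J b c 2 (al - 1) y / J b c 1 al y)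
          has_real_derivative L2 x) (at x)"
      unfolding L2_def
      by (intro DERIV_add DERIV_divide DERIV_cmult dA dB dJ0 dJ1) (use P0[OF x] Q0[OF x] in auto)
    then show "(L1 has_real_derivative L2 x) (at x)" unfolding L1_def .
  qed
  have L2nn: "\<And>x. x < 1 \<Longrightarrow> 0 \<le> L2 x"
  proof -
    fix x :: real assume x: "x < 1"
    define P where "P = J b c 0 al x"
    define Q where "Q = J b c 1 al x"
    define A where "A = J b c 1 (al - 1) x"
    define B where "B = J b c 2 (al - 1) x"
    define Cc where "Cc = J b c 2 (al - 2) x"
    define Dd where "Dd = J b c 3 (al - 2) x"
    have P: "P > 0" using P0[OF x] by (simp add: P_def)
    have Q: "Q > 0" using Q0[OF x] by (simp add: Q_def)
    have A: "A \<ge> 0" unfolding A_def using J_nonneg[OF b x] .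
    have i1: "Q * A \<le> P * B" using cheb[OF b x, of al 1] al
      unfolding P_def Q_def A_def B_def by (simp add: numeral_2_eq_2)
    have i2: "Q * Cc \<le> P * Dd" using cheb[OF b x, of al 2] al
      unfolding P_def Q_def Cc_def Dd_def by (simp add: numeral_2_eq_2 numeral_3_eq_3)
    have eq: "L2 x = al * (1 - al) * (Dd / Q - Cc / P) + al^2 * ((B / Q)^2 - (A / P)^2)"
      unfolding L2_def P_def[symmetric] Q_def[symmetric] A_def[symmetric] B_def[symmetric]
        Cc_def[symmetric] Dd_def[symmetric]
      using P Q by (simp add: field_simps power2_eq_square)
    have t1: "Cc / P \<le> Dd / Q" using i2 P Q by (simp add: divide_simps mult.commute)
    have t2: "A / P \<le> B / Q" using i1 P Q by (simp add: divide_simps mult.commute)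
    have t3: "0 \<le> A / P" using A P by simp
    have "(A / P)^2 \<le> (B / Q)^2" using t2 t3 by (rule power_mono)
    then have "0 \<le> al^2 * ((B / Q)^2 - (A / P)^2)" by simp
    moreover have "0 \<le> al * (1 - al) * (Dd / Q - Cc / P)" using al t1 by simp
    ultimately show "0 \<le> L2 x" unfolding eq by linarith
  qed
  have mono: "\<And>x y. x < 1 \<Longrightarrow> y < 1 \<Longrightarrow> x \<le> y \<Longrightarrow> L1 x \<le> L1 y"
  proof -
    fix x y :: real assume h: "x < 1" "y < 1" "x \<le> y"
    show "L1 x \<le> L1 y"
    proof (rule DERIV_nonneg_imp_increasing_open[OF h(3)])
      fix z assume z: "x < z" "z < y"
      then have "z < 1" using h by simp
      then show "\<exists>D. (L1 has_real_derivative D) (at z) \<and> 0 \<le> D" using dL1 L2nn by blast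
    next
      show "continuous_on {x..y} L1"
      proof (intro continuous_at_imp_continuous_on ballI)
        fix z assume "z \<in> {x..y}"
        then have "z < 1" using h by auto
        then show "isCont L1 z" using dL1 DERIV_isCont by blast
      qed
    qed
  qed
  have cL: "convex_on {..<1} L"
    by (rule convex_on_realI[where f' = L1]) (use dL mono in auto)
  have eqL: "\<And>x. x \<in> {..<1} \<Longrightarrow> L x = ln (hyp2F1 a b c x / hyp2F1 a (b + 1) (c + 1) x)"
  proof -
    fix x :: real assume "x \<in> {..<1}"
    then have x: "x < 1" by simp
    have "hyp2F1 a b c x / hyp2F1 a (b + 1) (c + 1) x = (K1 / K2) * (J b c 0 al x / J b c 1 al x)"
      using H1[OF x] H2[OF x] by simp
    then show "L x = ln (hyp2F1 a b c x / hyp2F1 a (b + 1) (c + 1) x)"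
      unfolding L_def using K P0[OF x] Q0[OF x] by (simp add: ln_mult ln_div)
  qed
  show ?thesis unfolding log_convex_on_def
  proof
    show "\<forall>x\<in>{..<1}. 0 < hyp2F1 a b c x / hyp2F1 a (b + 1) (c + 1) x"
      using H1 H2 K P0 Q0 by simp
    show "convex_on {..<1} (\<lambda>x. ln (hyp2F1 a b c x / hyp2F1 a (b + 1) (c + 1) x))"
      using convex_on_cong_pt[OF cL eqL] .
  qed
qed

end
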